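(* Let $R$ be a commutative ring, $n\ge 2$ an integer, and $S=\{m_1,\dots,m_n\}\subseteq R\setminus(\{0\}\cup R^\times)$ a set of $n$ pairwise coprime non-zero non-units, and $m=m_1m_2\cdots m_n$. Let $V$ be the set of perfect divisors of $m$ with respect to $S$, and define $\le$ on $V$ by $a\le b$ iff $a=b$ or $a\mid b$. Then $(V,\le)$ is a partially ordered set of cardinality $|V|=2^n-2$, and the perfect divisor graph $\mathrm{pdg}(S)$ is a partial order graph.
   Context: Rings have $1\neq 0$; $R^\times$ is the unit group. Elements $a,b$ are coprime if $ra+sb=1$ for some $r,s\in R$. A perfect divisor of $m$ with respect to $S$ is an element $d\neq m$ that is a product of distinct elements of $S$ (a product $\prod_{j\in J} m_j$ with $\emptyset\neq J\subseteq\{1,\dots,n\}$). The perfect divisor graph $\mathrm{pdg}(S)$ is the simple undirected graph whose vertex set is the set of perfect divisors of $m$ with respect to $S$, two distinct vertices $a,b$ being adjacent iff $a\mid b$ or $b\mid a$. A partial order graph is a graph of the form $G_A$ for a poset $(A,\le)$: vertex set $A$, distinct $a,b$ adjacent iff $a\le b$ or $b\le a$. *)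

theory Defs
  imports Main
begin

definition bezout_coprime :: "'a::comm_ring_1 \<Rightarrow> 'a \<Rightarrow> bool" where
  "bezout_coprime a b \<longleftrightarrow> (\<exists>r s. r * a + s * b = 1)"

definition perfect_divisors :: "(nat \<Rightarrow> 'a::comm_ring_1) \<Rightarrow> nat \<Rightarrow> 'a set" where
  "perfect_divisors ms n =
     {d. (\<exists>J. J \<noteq> {} \<and> J \<subseteq> {0..<n} \<and> d = (\<Prod>j\<in>J. ms j)) \<and> d \<noteq> (\<Prod>j<n. ms j)}"

definition pd_order :: "'a::comm_ring_1 set \<Rightarrow> ('a \<times> 'a) set" where
  "pd_order V = {(a, b). a \<in> V \<and> b \<in> V \<and> (a = b \<or> a dvd b)}"

definition pdg_adj :: "'a::comm_ring_1 \<Rightarrow> 'a \<Rightarrow> bool" where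
  "pdg_adj a b \<longleftrightarrow> a \<noteq> b \<and> (a dvd b \<or> b dvd a)"

definition partial_order_graph :: "'v set \<Rightarrow> ('v \<Rightarrow> 'v \<Rightarrow> bool) \<Rightarrow> bool" where
  "partial_order_graph V E \<longleftrightarrow>
     (\<exists>r. partial_order_on V r \<and>
          (\<forall>a\<in>V. \<forall>b\<in>V. (E a b \<longleftrightarrow> a \<noteq> b \<and> ((a, b) \<in> r \<or> (b, a) \<in> r))))"

end

theory Submission
  imports Defs
begin

lemma bc_mult:
  fixes a b c :: "'a::comm_ring_1"
  assumes "bezout_coprime a b" "bezout_coprime a c"
  shows "bezout_coprime a (b * c)"
proof -
  obtain r s where 1: "r * a + s * b = 1" using assms(1) unfolding bezout_coprime_def by blast
  obtain r' s' where 2: "r' * a + s' * c = 1" using assms(2) unfolding bezout_coprime_def by blast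
  have "(r * a + s * b) * (r' * a + s' * c) = 1" using 1 2 by simp
  hence "(r * r' * a + r * s' * c + s * b * r') * a + (s * s') * (b * c) = 1"
    by (simp add: algebra_simps)
  thus ?thesis unfolding bezout_coprime_def by blast
qed

lemma bc_prod:
  fixes a :: "'a::comm_ring_1"
  assumes "finite K" "\<And>j. j \<in> K \<Longrightarrow> bezout_coprime a (f j)"
  shows "bezout_coprime a (prod f K)"
  using assms
proof (induction K rule: finite_induct)
  case empty
  then show ?case unfolding bezout_coprime_def by (intro exI[of _ 0] exI[of _ 1]) simp
next
  case (insert x F)
  then show ?case by (simp add: bc_mult)
qed

lemma bc_dvd_unit:
  fixes a b :: "'a::comm_ring_1"
  assumes "bezout_coprime a b" "a dvd b"
  shows "a dvd 1"
proof -
  obtain r s where 1: "r * a + s * b = 1" using assms(1) unfolding bezout_coprime_def by blast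
  obtain t where "b = a * t" using assms(2) by blast
  with 1 have "a * (r + s * t) = 1" by (simp add: algebra_simps)
  thus ?thesis by (metis dvd_triv_left)
qed

lemma key_subset:
  fixes ms :: "nat \<Rightarrow> 'a::comm_ring_1"
  assumes "\<And>i. i < n \<Longrightarrow> ms i \<noteq> 0 \<and> \<not> ms i dvd 1"
    and "\<And>i j. i < n \<Longrightarrow> j < n \<Longrightarrow> i \<noteq> j \<Longrightarrow> bezout_coprime (ms i) (ms j)"
    and "J \<subseteq> {0..<n}" "K \<subseteq> {0..<n}" "prod ms J dvd prod ms K"
  shows "J \<subseteq> K"
proof
  fix i assume i: "i \<in> J"
  show "i \<in> K"
  proof (rule ccontr)
    assume ni: "i \<notin> K"
    have fin: "finite K" using assms(4) finite_subset by blast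
    have "ms i dvd prod ms J" using i assms(3) finite_subset[OF assms(3)]
      by (simp add: dvd_prodI)
    hence d: "ms i dvd prod ms K" using assms(5) dvd_trans by blast
    have "bezout_coprime (ms i) (prod ms K)"
    proof (rule bc_prod[OF fin])
      fix j assume j: "j \<in> K"
      have "i < n" "j < n" "i \<noteq> j" using i j ni assms(3,4) by auto
      thus "bezout_coprime (ms i) (ms j)" using assms(2) by blast
    qed
    hence "ms i dvd 1" using d bc_dvd_unit by blast
    thus False using assms(1)[of i] assms(3) i by auto
  qed
qed

theorem lemma3p2:
  fixes ms :: "nat \<Rightarrow> 'a::comm_ring_1" and n :: nat
  assumes "n \<ge> 2"
    and "inj_on ms {0..<n}"
    and "\<And>i. i < n \<Longrightarrow> ms i \<noteq> 0 \<and> \<not> ms i dvd 1"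
    and "\<And>i j. i < n \<Longrightarrow> j < n \<Longrightarrow> i \<noteq> j \<Longrightarrow> bezout_coprime (ms i) (ms j)"
  shows "partial_order_on (perfect_divisors ms n) (pd_order (perfect_divisors ms n))
       \<and> card (perfect_divisors ms n) = 2 ^ n - 2
       \<and> partial_order_graph (perfect_divisors ms n) pdg_adj"
proof -
  define V where "V = perfect_divisors ms n"
  define A where "A = {0..<n::nat}"
  have sub: "J \<subseteq> K" if "J \<subseteq> A" "K \<subseteq> A" "prod ms J dvd prod ms K" for J K
    using key_subset[OF assms(3,4), where J=J and K=K] that unfolding A_def by simp
  have inj: "inj_on (prod ms) (Pow A)"
  proof (rule inj_onI)
    fix J K assume "J \<in> Pow A" "K \<in> Pow A" "prod ms J = prod ms K"
    hence "J \<subseteq> A" "K \<subseteq> A" "prod ms J dvd prod ms K" "prod ms K dvd prod ms J" by auto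
    hence "J \<subseteq> K" "K \<subseteq> J" using sub by simp_all
    thus "J = K" by (rule subset_antisym)
  qed
  have VA: "V = prod ms ` (Pow A - {{}, A})"
  proof -
    have e1: "(\<Prod>j<n. ms j) = prod ms A" unfolding A_def by (simp add: lessThan_atLeast0)
    have e2: "prod ms J = prod ms A \<longleftrightarrow> J = A" if "J \<subseteq> A" for J
      using inj_onD[OF inj, of J A] that by auto
    show ?thesis
    proof (rule set_eqI)
      fix d
      show "d \<in> V \<longleftrightarrow> d \<in> prod ms ` (Pow A - {{}, A})"
      proof
        assume "d \<in> V"
        then obtain J where J: "J \<noteq> {}" "J \<subseteq> A" "d = prod ms J" "d \<noteq> prod ms A"
          unfolding V_def perfect_divisors_def e1 A_def by blast
        hence "J \<noteq> A" by blast
        with J show "d \<in> prod ms ` (Pow A - {{}, A})" by blast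
      next
        assume "d \<in> prod ms ` (Pow A - {{}, A})"
        then obtain J where J: "J \<noteq> {}" "J \<subseteq> A" "d = prod ms J" "J \<noteq> A" by blast
        hence "d \<noteq> prod ms A" using e2 by simp
        with J show "d \<in> V" unfolding V_def perfect_divisors_def e1 A_def by blast
      qed
    qed
  qed
  have VJ: "\<And>a. a \<in> V \<Longrightarrow> \<exists>J. J \<subseteq> A \<and> a = prod ms J" using VA by auto
  have antis: "\<And>a b. a \<in> V \<Longrightarrow> b \<in> V \<Longrightarrow> a dvd b \<Longrightarrow> b dvd a \<Longrightarrow> a = b"
  proof -
    fix a b assume "a \<in> V" "b \<in> V" "a dvd b" "b dvd a"
    then obtain J K where "J \<subseteq> A" "K \<subseteq> A" "a = prod ms J" "b = prod ms K" using VJ by metis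
    hence "J \<subseteq> K" "K \<subseteq> J" using sub \<open>a dvd b\<close> \<open>b dvd a\<close> by simp_all
    hence "J = K" by (rule subset_antisym)
    thus "a = b" using \<open>a = prod ms J\<close> \<open>b = prod ms K\<close> by simp
  qed
  have po: "partial_order_on V (pd_order V)"
    unfolding partial_order_on_def preorder_on_def refl_on_def trans_def antisym_def pd_order_def
  proof (intro conjI allI impI ballI)
    show "{(a, b). a \<in> V \<and> b \<in> V \<and> (a = b \<or> a dvd b)} \<subseteq> V \<times> V" by blast
  next
    fix x assume "x \<in> V" thus "(x, x) \<in> {(a, b). a \<in> V \<and> b \<in> V \<and> (a = b \<or> a dvd b)}" by simp
  next
    fix x y z assume "(x, y) \<in> {(a, b). a \<in> V \<and> b \<in> V \<and> (a = b \<or> a dvd b)}"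
      "(y, z) \<in> {(a, b). a \<in> V \<and> b \<in> V \<and> (a = b \<or> a dvd b)}"
    thus "(x, z) \<in> {(a, b). a \<in> V \<and> b \<in> V \<and> (a = b \<or> a dvd b)}"
      using dvd_trans by auto
  next
    fix x y assume "(x, y) \<in> {(a, b). a \<in> V \<and> b \<in> V \<and> (a = b \<or> a dvd b)}"
      "(y, x) \<in> {(a, b). a \<in> V \<and> b \<in> V \<and> (a = b \<or> a dvd b)}"
    thus "x = y" using antis by auto
  qed
  have "card V = card (Pow A - {{}, A})"
    unfolding VA by (rule card_image) (rule inj_on_subset[OF inj], blast)
  also have "\<dots> = 2 ^ n - 2"
  proof -
    have "A \<noteq> {}" using assms(1) unfolding A_def by auto
    hence "card {{}, A} = 2" by simp
    moreover have "card (Pow A) = 2 ^ n" unfolding A_def by (simp add: card_Pow)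
    ultimately show ?thesis
      by (subst card_Diff_subset) (auto simp: A_def)
  qed
  finally have "card V = 2 ^ n - 2" .
  moreover have "partial_order_graph V pdg_adj"
    unfolding partial_order_graph_def
  proof (rule exI[of _ "pd_order V"], rule conjI)
    show "partial_order_on V (pd_order V)" by (rule po)
    show "\<forall>a\<in>V. \<forall>b\<in>V. pdg_adj a b = (a \<noteq> b \<and> ((a, b) \<in> pd_order V \<or> (b, a) \<in> pd_order V))"
      by (auto simp: pdg_adj_def pd_order_def)
  qed
  ultimately show ?thesis using po unfolding V_def[symmetric] by simp
qed

end
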